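(* Let $\mathbf{p}$ be a finite list of distinct predicate constants (the explainable symbols), and let $C$, $L$, $S$, $D$ be finite sets of causal rules of types C, L, S and D respectively (with respect to $\mathbf{p}$). Let $T$ be the causal theory with explainable symbols $\mathbf{p}$ and set of rules $C\cup L\cup S\cup D$. Then the second-order sentence $\mathrm{SM}_{\mathbf{p}\widehat{\mathbf{p}}}[\mathrm{tr}[C,L,S,D]]$ is logically equivalent to $T\land CC$.
   Context: Formulas are first-order formulas built from $\top,\bot,\neg,\land,\lor,\to$ and quantifiers; $\widetilde\forall F$ denotes the universal closure of $F$. Throughout, the bodies of causal rules contain no implication $\to$. Causal theories. A causal theory $T$ is given by a list $\mathbf{p}$ of distinct predicate constants (explainable symbols; equality is not among them) and a finite set of causal rules $F\Leftarrow G$, where $F,G$ are first-order formulas. For each $p\in\mathbf{p}$ choose a new predicate variable $u_p$ of the same arity; let $\mathbf{u}$ be the list of these. $T^\dagger(\mathbf{u})$ is the conjunction of the formulas $\forall\mathbf{x}(G\to F^{\mathbf{p}}_{\mathbf{u}})$ over all rules $F\Leftarrow G$ of $T$, where $\mathbf{x}$ lists the free variables of $F,G$ and $F^{\mathbf{p}}_{\mathbf{u}}$ is the result of replacing each $p$ by $u_p$. $T$ is identified with the sentence $\forall\mathbf{u}(T^\dagger(\mathbf{u})\leftrightarrow(\mathbf{u}=\mathbf{p}))$, where $\mathbf{u}=\mathbf{p}$ is the conjunction of $\forall\mathbf{x}(u_p(\mathbf{x})\leftrightarrow p(\mathbf{x}))$ for all $p\in\mathbf{p}$. Rule types: a C-rule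 is $\bot\Leftarrow G$; an L-rule has head a literal whose predicate is in $\mathbf{p}$; an S-rule has head $L_1\leftrightarrow L_2$ with $L_1,L_2$ literals whose predicates are in $\mathbf{p}$; a D-rule has head $L_1\lor\dots\lor L_n$ ($n\ge 0$), each $L_i$ a literal with predicate in $\mathbf{p}$, i.e. it has the form $\bigvee_{A\in Pos}A\lor\bigvee_{A\in Neg}\neg A\Leftarrow G$ for sets $Pos,Neg$ of atomic formulas. Stable models. A program rule is a sentence $\widetilde\forall(F\to G)$ with no other occurrence of $\to$ (a sentence without $\to$ is identified with $\top\to F$); a logic program is a conjunction of program rules. For predicate constants (or variables) $p,q$ of the same arity, $p\le q$ is $\forall\mathbf{x}(p(\mathbf{x})\to q(\mathbf{x}))$; for tuples, $\mathbf{p}\le\mathbf{q}$ is the conjunction componentwise, and $\mathbf{p}<\mathbf{q}$ is $(\mathbf{p}\le\mathbf{q})\land\neg(\mathbf{q}\le\mathbf{p})$. For a list $\mathbf{q}$ of intensional predicates with corresponding new predicate variables $\mathbf{w}$, and a logic program $F$, $\mathrm{SM}_{\mathbf{q}}[F]$ is $F\land\neg\exists\mathbf{w}((\mathbf{w}<\mathbf{q})\land F^\diamond(\mathbf{w}))$, where $F^\diamond(\mathbf{w})$ is obtained from $F$ by replacing each occurrence of each $q\in\mathbf{q}$ that is not in the scope of negation $\neg$ by the corresponding variable. Translation. For each $p\in\mathbf{p}$ let $\widehat{p}$ be a new predicate constant of the same arity; $\widehat{\mathbf{p}}$ is the list of these; for an atom $A=p(\mathbf{t})$ with $p\in\mathbf{p}$,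 $\widehat A$ denotes $\widehat p(\mathbf{t})$. $CC$ is the conjunction, over all $p\in\mathbf{p}$, of $\forall\mathbf{x}\neg(p(\mathbf{x})\land\widehat p(\mathbf{x}))$ and $\forall\mathbf{x}\neg(\neg p(\mathbf{x})\land\neg\widehat p(\mathbf{x}))$. Define: $\mathrm{tr}_c[\bot\Leftarrow G]=\widetilde\forall\neg G$; $\mathrm{tr}_l[p(\mathbf{t})\Leftarrow G]=\widetilde\forall(\neg\neg G\to p(\mathbf{t}))$, $\mathrm{tr}_l[\neg p(\mathbf{t})\Leftarrow G]=\widetilde\forall(\neg\neg G\to\widehat p(\mathbf{t}))$; $\mathrm{tr}_s[p_1(\mathbf{t}^1)\leftrightarrow p_2(\mathbf{t}^2)\Leftarrow G]=\mathrm{tr}_s[\neg p_1(\mathbf{t}^1)\leftrightarrow\neg p_2(\mathbf{t}^2)\Leftarrow G]$ is the conjunction of $\widetilde\forall(\neg\neg G\land p_1(\mathbf{t}^1)\to p_2(\mathbf{t}^2))$, $\widetilde\forall(\neg\neg G\land p_2(\mathbf{t}^2)\to p_1(\mathbf{t}^1))$, $\widetilde\forall(\neg\neg G\land \widehat{p_1}(\mathbf{t}^1)\to \widehat{p_2}(\mathbf{t}^2))$, $\widetilde\forall(\neg\neg G\land \widehat{p_2}(\mathbf{t}^2)\to \widehat{p_1}(\mathbf{t}^1))$; $\mathrm{tr}_s[\neg p_1(\mathbf{t}^1)\leftrightarrow p_2(\mathbf{t}^2)\Leftarrow G]=\mathrm{tr}_s[p_1(\mathbf{t}^1)\leftrightarrow\neg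 p_2(\mathbf{t}^2)\Leftarrow G]$ is the conjunction of $\widetilde\forall(\neg\neg G\land \widehat{p_1}(\mathbf{t}^1)\to p_2(\mathbf{t}^2))$, $\widetilde\forall(\neg\neg G\land p_2(\mathbf{t}^2)\to \widehat{p_1}(\mathbf{t}^1))$, $\widetilde\forall(\neg\neg G\land p_1(\mathbf{t}^1)\to \widehat{p_2}(\mathbf{t}^2))$, $\widetilde\forall(\neg\neg G\land \widehat{p_2}(\mathbf{t}^2)\to p_1(\mathbf{t}^1))$; and for a D-rule $\bigvee_{A\in Pos}A\lor\bigvee_{A\in Neg}\neg A\Leftarrow G$, $\mathrm{tr}_d$ gives $\widetilde\forall\big(\neg\neg G\land\bigwedge_{A\in Pos}(\widehat A\lor\neg\widehat A)\land\bigwedge_{A\in Neg}(A\lor\neg A)\to\bigvee_{A\in Pos}A\lor\bigvee_{A\in Neg}\widehat A\big)$. $\mathrm{tr}[C,L,S,D]$ is the conjunction of $\mathrm{tr}_c[R]$ for $R\in C$, $\mathrm{tr}_l[R]$ for $R\in L$, $\mathrm{tr}_s[R]$ for $R\in S$, $\mathrm{tr}_d[R]$ for $R\in D$, and $CC$. In $\mathrm{SM}_{\mathbf{p}\widehat{\mathbf{p}}}$ the intensional predicates are those of $\mathbf{p}$ and $\widehat{\mathbf{p}}$. *)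

theory Defs
  imports Main
begin

datatype 'f trm = Var nat | Fn 'f "'f trm list"

datatype ('f, 'p) form =
    FTop | FBot
  | FAtom 'p "'f trm list"
  | FEq "'f trm" "'f trm"
  | FNeg "('f, 'p) form"
  | FAnd "('f, 'p) form" "('f, 'p) form"
  | FOr "('f, 'p) form" "('f, 'p) form"
  | FImp "('f, 'p) form" "('f, 'p) form"
  | FAll nat "('f, 'p) form"
  | FEx nat "('f, 'p) form"

datatype 'p hsym = Orig 'p | Hat 'p

fun lift :: "('f, 'p) form \<Rightarrow> ('f, 'p hsym) form" where
  "lift FTop = FTop"
| "lift FBot = FBot"
| "lift (FAtom p ts) = FAtom (Orig p) ts"
| "lift (FEq s t) = FEq s t"
| "lift (FNeg F) = FNeg (lift F)"
| "lift (FAnd F G) = FAnd (lift F) (lift G)"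
| "lift (FOr F G) = FOr (lift F) (lift G)"
| "lift (FImp F G) = FImp (lift F) (lift G)"
| "lift (FAll x F) = FAll x (lift F)"
| "lift (FEx x F) = FEx x (lift F)"

definition FIff :: "('f, 'p) form \<Rightarrow> ('f, 'p) form \<Rightarrow> ('f, 'p) form" where
  "FIff F G = FAnd (FImp F G) (FImp G F)"

fun disj :: "('f, 'p) form list \<Rightarrow> ('f, 'p) form" where
  "disj [] = FBot"
| "disj [F] = F"
| "disj (F # Fs) = FOr F (disj Fs)"

fun conj :: "('f, 'p) form list \<Rightarrow> ('f, 'p) form" where
  "conj [] = FTop"
| "conj [F] = F"
| "conj (F # Fs) = FAnd F (conj Fs)"

fun no_imp :: "('f, 'p) form \<Rightarrow> bool" where
  "no_imp (FNeg F) = no_imp F"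
| "no_imp (FAnd F G) = (no_imp F \<and> no_imp G)"
| "no_imp (FOr F G) = (no_imp F \<and> no_imp G)"
| "no_imp (FImp F G) = False"
| "no_imp (FAll x F) = no_imp F"
| "no_imp (FEx x F) = no_imp F"
| "no_imp _ = True"

fun wf :: "('p \<Rightarrow> nat) \<Rightarrow> ('f, 'p) form \<Rightarrow> bool" where
  "wf ar (FAtom p ts) = (length ts = ar p)"
| "wf ar (FNeg F) = wf ar F"
| "wf ar (FAnd F G) = (wf ar F \<and> wf ar G)"
| "wf ar (FOr F G) = (wf ar F \<and> wf ar G)"
| "wf ar (FImp F G) = (wf ar F \<and> wf ar G)"
| "wf ar (FAll x F) = wf ar F"
| "wf ar (FEx x F) = wf ar F"
| "wf ar _ = True"

text \<open>A structure with universe the type 'a: interpretation I of function constants and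
  P of predicate constants (relations as predicates on argument lists).\<close>
fun evalt :: "('f \<Rightarrow> 'a list \<Rightarrow> 'a) \<Rightarrow> (nat \<Rightarrow> 'a) \<Rightarrow> 'f trm \<Rightarrow> 'a" where
  "evalt I e (Var n) = e n"
| "evalt I e (Fn f ts) = I f (map (evalt I e) ts)"

fun eval :: "('f \<Rightarrow> 'a list \<Rightarrow> 'a) \<Rightarrow> ('p \<Rightarrow> 'a list \<Rightarrow> bool) \<Rightarrow> (nat \<Rightarrow> 'a)
              \<Rightarrow> ('f, 'p) form \<Rightarrow> bool" where
  "eval I P e FTop = True"
| "eval I P e FBot = False"
| "eval I P e (FAtom p ts) = P p (map (evalt I e) ts)"
| "eval I P e (FEq s t) = (evalt I e s = evalt I e t)"
| "eval I P e (FNeg F) = (\<not> eval I P e F)"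
| "eval I P e (FAnd F G) = (eval I P e F \<and> eval I P e G)"
| "eval I P e (FOr F G) = (eval I P e F \<or> eval I P e G)"
| "eval I P e (FImp F G) = (eval I P e F \<longrightarrow> eval I P e G)"
| "eval I P e (FAll x F) = (\<forall>a. eval I P (e(x := a)) F)"
| "eval I P e (FEx x F) = (\<exists>a. eval I P (e(x := a)) F)"

definition holds :: "('f \<Rightarrow> 'a list \<Rightarrow> 'a) \<Rightarrow> ('p \<Rightarrow> 'a list \<Rightarrow> bool) \<Rightarrow> ('f, 'p) form \<Rightarrow> bool" where
  "holds I P F = (\<forall>e. eval I P e F)"

text \<open>Semantics of the formula F-diamond(w): every occurrence of an intensional predicate
  q in Q that is not in the scope of negation is interpreted by W q; occurrences in the
  scope of negation keep their original interpretation P.\<close>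
fun evald :: "('f \<Rightarrow> 'a list \<Rightarrow> 'a) \<Rightarrow> ('p \<Rightarrow> 'a list \<Rightarrow> bool) \<Rightarrow> ('p \<Rightarrow> 'a list \<Rightarrow> bool)
              \<Rightarrow> 'p set \<Rightarrow> (nat \<Rightarrow> 'a) \<Rightarrow> ('f, 'p) form \<Rightarrow> bool" where
  "evald I P W Q e FTop = True"
| "evald I P W Q e FBot = False"
| "evald I P W Q e (FAtom p ts) = (if p \<in> Q then W p else P p) (map (evalt I e) ts)"
| "evald I P W Q e (FEq s t) = (evalt I e s = evalt I e t)"
| "evald I P W Q e (FNeg F) = (\<not> eval I P e F)"
| "evald I P W Q e (FAnd F G) = (evald I P W Q e F \<and> evald I P W Q e G)"
| "evald I P W Q e (FOr F G) = (evald I P W Q e F \<or> evald I P W Q e G)"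
| "evald I P W Q e (FImp F G) = (evald I P W Q e F \<longrightarrow> evald I P W Q e G)"
| "evald I P W Q e (FAll x F) = (\<forall>a. evald I P W Q (e(x := a)) F)"
| "evald I P W Q e (FEx x F) = (\<exists>a. evald I P W Q (e(x := a)) F)"

definition le_on :: "('p \<Rightarrow> nat) \<Rightarrow> 'p set \<Rightarrow> ('p \<Rightarrow> 'a list \<Rightarrow> bool) \<Rightarrow> ('p \<Rightarrow> 'a list \<Rightarrow> bool) \<Rightarrow> bool" where
  "le_on ar Q R1 R2 = (\<forall>q\<in>Q. \<forall>xs. length xs = ar q \<longrightarrow> R1 q xs \<longrightarrow> R2 q xs)"

text \<open>Truth of SM_Q[F] in the structure (I,P), where the logic program F is given as the set
  Prog of its program rules (each understood as its universal closure).\<close>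
definition SM :: "('p \<Rightarrow> nat) \<Rightarrow> 'p set \<Rightarrow> ('f, 'p) form set
                  \<Rightarrow> ('f \<Rightarrow> 'a list \<Rightarrow> 'a) \<Rightarrow> ('p \<Rightarrow> 'a list \<Rightarrow> bool) \<Rightarrow> bool" where
  "SM ar Q Prog I P =
     ((\<forall>F\<in>Prog. holds I P F) \<and>
      \<not> (\<exists>W. le_on ar Q W P \<and> \<not> le_on ar Q P W \<and> (\<forall>F\<in>Prog. \<forall>e. evald I P W Q e F)))"

type_synonym ('f, 'p) crule = "('f, 'p) form \<times> ('f, 'p) form"  \<comment> \<open>(head F, body G) for F <= G\<close>

text \<open>Truth of the causal theory T (explainable symbols ps, rules R) in (I,P):
  forall u. (T-dagger(u) <-> u = p).\<close>
definition causal_sat :: "('p \<Rightarrow> nat) \<Rightarrow> 'p list \<Rightarrow> ('f, 'p) crule set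
                  \<Rightarrow> ('f \<Rightarrow> 'a list \<Rightarrow> 'a) \<Rightarrow> ('p \<Rightarrow> 'a list \<Rightarrow> bool) \<Rightarrow> bool" where
  "causal_sat ar ps R I P =
     (\<forall>U :: 'p \<Rightarrow> 'a list \<Rightarrow> bool.
        (\<forall>(F, G)\<in>R. \<forall>e. eval I P e G \<longrightarrow> eval I (\<lambda>q. if q \<in> set ps then U q else P q) e F)
        \<longleftrightarrow> (\<forall>p\<in>set ps. \<forall>xs. length xs = ar p \<longrightarrow> (U p xs \<longleftrightarrow> P p xs)))"

text \<open>Literals: (True, p, ts) is p(ts), (False, p, ts) is not p(ts). Atoms: (p, ts).\<close>
type_synonym ('f, 'p) lit = "bool \<times> 'p \<times> 'f trm list"
type_synonym ('f, 'p) atm = "'p \<times> 'f trm list"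

fun lit_form :: "('f, 'p) lit \<Rightarrow> ('f, 'p) form" where
  "lit_form (b, p, ts) = (if b then FAtom p ts else FNeg (FAtom p ts))"

text \<open>The rule types. A C-rule is given by its body G; an L-rule by (literal, body);
  an S-rule by (L1, L2, body); a D-rule by (Pos, Neg, body).\<close>
definition C_rule :: "('f, 'p) form \<Rightarrow> ('f, 'p) crule" where
  "C_rule G = (FBot, G)"

definition L_rule :: "('f, 'p) lit \<times> ('f, 'p) form \<Rightarrow> ('f, 'p) crule" where
  "L_rule r = (lit_form (fst r), snd r)"

definition S_rule :: "('f, 'p) lit \<times> ('f, 'p) lit \<times> ('f, 'p) form \<Rightarrow> ('f, 'p) crule" where
  "S_rule r = (case r of (l1, l2, G) \<Rightarrow> (FIff (lit_form l1) (lit_form l2), G))"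

definition D_rule :: "('f, 'p) atm list \<times> ('f, 'p) atm list \<times> ('f, 'p) form \<Rightarrow> ('f, 'p) crule" where
  "D_rule r = (case r of (Pos, Ng, G) \<Rightarrow>
      (disj (map (\<lambda>(p, ts). FAtom p ts) Pos @ map (\<lambda>(p, ts). FNeg (FAtom p ts)) Ng), G))"

definition rules_of where
  "rules_of C L S D = C_rule ` C \<union> L_rule ` L \<union> S_rule ` S \<union> D_rule ` D"

definition ok_lit :: "('p \<Rightarrow> nat) \<Rightarrow> 'p list \<Rightarrow> ('f, 'p) lit \<Rightarrow> bool" where
  "ok_lit ar ps l = (case l of (b, p, ts) \<Rightarrow> p \<in> set ps \<and> length ts = ar p)"

definition ok_atm :: "('p \<Rightarrow> nat) \<Rightarrow> 'p list \<Rightarrow> ('f, 'p) atm \<Rightarrow> bool" where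
  "ok_atm ar ps a = (case a of (p, ts) \<Rightarrow> p \<in> set ps \<and> length ts = ar p)"

definition ok_body :: "('p \<Rightarrow> nat) \<Rightarrow> ('f, 'p) form \<Rightarrow> bool" where
  "ok_body ar G = (wf ar G \<and> no_imp G)"

abbreviation nn :: "('f, 'p) form \<Rightarrow> ('f, 'p) form" where
  "nn G \<equiv> FNeg (FNeg G)"

definition tr_c :: "('f, 'p) form \<Rightarrow> ('f, 'p hsym) form set" where
  "tr_c G = {FNeg (lift G)}"

definition tr_l :: "('f, 'p) lit \<times> ('f, 'p) form \<Rightarrow> ('f, 'p hsym) form set" where
  "tr_l r = (case r of ((b, p, ts), G) \<Rightarrow>
     {FImp (nn (lift G)) (FAtom (if b then Orig p else Hat p) ts)})"

definition tr_s :: "('f, 'p) lit \<times> ('f, 'p) lit \<times> ('f, 'p) form \<Rightarrow> ('f, 'p hsym) form set" where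
  "tr_s r = (case r of ((b1, p1, t1), (b2, p2, t2), G) \<Rightarrow>
     (let G' = nn (lift G);
          O1 = FAtom (Orig p1) t1; H1 = FAtom (Hat p1) t1;
          O2 = FAtom (Orig p2) t2; H2 = FAtom (Hat p2) t2
      in if b1 = b2 then
           {FImp (FAnd G' O1) O2, FImp (FAnd G' O2) O1,
            FImp (FAnd G' H1) H2, FImp (FAnd G' H2) H1}
         else
           {FImp (FAnd G' H1) O2, FImp (FAnd G' O2) H1,
            FImp (FAnd G' O1) H2, FImp (FAnd G' H2) O1}))"

definition tr_d :: "('f, 'p) atm list \<times> ('f, 'p) atm list \<times> ('f, 'p) form \<Rightarrow> ('f, 'p hsym) form set" where
  "tr_d r = (case r of (Pos, Ng, G) \<Rightarrow>
     {FImp (FAnd (nn (lift G))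
                 (conj (map (\<lambda>(p, ts). FOr (FAtom (Hat p) ts) (FNeg (FAtom (Hat p) ts))) Pos
                      @ map (\<lambda>(p, ts). FOr (FAtom (Orig p) ts) (FNeg (FAtom (Orig p) ts))) Ng)))
           (disj (map (\<lambda>(p, ts). FAtom (Orig p) ts) Pos @ map (\<lambda>(p, ts). FAtom (Hat p) ts) Ng))})"

definition CC :: "('p \<Rightarrow> nat) \<Rightarrow> 'p list \<Rightarrow> ('f, 'p hsym) form set" where
  "CC ar ps = (\<Union>p\<in>set ps.
     (let xs = map Var [0..<ar p] in
       {FNeg (FAnd (FAtom (Orig p) xs) (FAtom (Hat p) xs)),
        FNeg (FAnd (FNeg (FAtom (Orig p) xs)) (FNeg (FAtom (Hat p) xs)))}))"

definition tr where
  "tr ar ps C L S D = (\<Union>G\<in>C. tr_c G) \<union> (\<Union>r\<in>L. tr_l r) \<union> (\<Union>r\<in>S. tr_s r)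
                      \<union> (\<Union>r\<in>D. tr_d r) \<union> CC ar ps"

fun har :: "('p \<Rightarrow> nat) \<Rightarrow> 'p hsym \<Rightarrow> nat" where
  "har ar (Orig p) = ar p"
| "har ar (Hat p) = ar p"

definition hQ :: "'p list \<Rightarrow> 'p hsym set" where
  "hQ ps = Orig ` set ps \<union> Hat ` set ps"

end

theory Submission
  imports Defs
begin

lemma eval_lift[simp]: "eval I P e (lift G) = eval I (P \<circ> Orig) e G"
  by (induction G arbitrary: e) auto

lemma eval_disj[simp]: "eval I P e (disj Fs) = (\<exists>F\<in>set Fs. eval I P e F)"
  by (induction Fs rule: disj.induct) auto
lemma evald_disj[simp]: "evald I P W Q e (disj Fs) = (\<exists>F\<in>set Fs. evald I P W Q e F)"
  by (induction Fs rule: disj.induct) auto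
lemma eval_conj[simp]: "eval I P e (conj Fs) = (\<forall>F\<in>set Fs. eval I P e F)"
  by (induction Fs rule: conj.induct) auto
lemma evald_conj[simp]: "evald I P W Q e (conj Fs) = (\<forall>F\<in>set Fs. evald I P W Q e F)"
  by (induction Fs rule: conj.induct) auto

lemma evald_P: "evald I P P Q e F = eval I P e F"
  by (induction F arbitrary: e) auto

lemma hl_dia: "(\<forall>F\<in>A. holds I P F) = (\<forall>F\<in>A. \<forall>e. evald I P P Q e F)"
  by (simp add: holds_def evald_P)

lemma bex_img[simp]: "(\<exists>x\<in>f ` A. Q x) = (\<exists>a\<in>A. Q (f a))" by auto
lemma ball_img[simp]: "(\<forall>x\<in>f ` A. Q x) = (\<forall>a\<in>A. Q (f a))" by auto

lemma Ball_pair: "(\<forall>a\<in>A. R a) = (\<forall>p ts. (p,ts)\<in>A \<longrightarrow> R (p,ts))" by auto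
lemma Bex_pair: "(\<exists>a\<in>A. R a) = (\<exists>p ts. (p,ts)\<in>A \<and> R (p,ts))" by auto

lemma hQ_simps[simp]: "Orig p \<in> hQ ps \<longleftrightarrow> p \<in> set ps" "Hat p \<in> hQ ps \<longleftrightarrow> p \<in> set ps"
  by (auto simp: hQ_def)

definition ccP :: "('p \<Rightarrow> nat) \<Rightarrow> 'p list \<Rightarrow> ('p hsym \<Rightarrow> 'a list \<Rightarrow> bool) \<Rightarrow> bool" where
  "ccP ar ps P = (\<forall>p\<in>set ps. \<forall>xs. length xs = ar p \<longrightarrow> (P (Hat p) xs \<longleftrightarrow> \<not> P (Orig p) xs))"

definition sat :: "('f \<Rightarrow> 'a list \<Rightarrow> 'a) \<Rightarrow> ('p \<Rightarrow> 'a list \<Rightarrow> bool) \<Rightarrow> ('p \<Rightarrow> 'a list \<Rightarrow> bool)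
   \<Rightarrow> ('f, 'p) crule \<Rightarrow> bool" where
  "sat I P' V r = (\<forall>e. eval I P' e (snd r) \<longrightarrow> eval I V e (fst r))"

definition Wd :: "('p hsym \<Rightarrow> 'a list \<Rightarrow> bool) \<Rightarrow> ('p \<Rightarrow> 'a list \<Rightarrow> bool) \<Rightarrow> 'p hsym \<Rightarrow> 'a list \<Rightarrow> bool" where
  "Wd P U q = (case q of Orig p \<Rightarrow> (\<lambda>xs. P (Orig p) xs \<and> U p xs) | Hat p \<Rightarrow> (\<lambda>xs. P (Hat p) xs \<and> \<not> U p xs))"

lemma Wd_simps[simp]: "Wd P U (Orig p) xs = (P (Orig p) xs \<and> U p xs)" "Wd P U (Hat p) xs = (P (Hat p) xs \<and> \<not> U p xs)"
  by (auto simp: Wd_def)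

definition Ud :: "('p hsym \<Rightarrow> 'a list \<Rightarrow> bool) \<Rightarrow> ('p hsym \<Rightarrow> 'a list \<Rightarrow> bool) \<Rightarrow> 'p \<Rightarrow> 'a list \<Rightarrow> bool" where
  "Ud P W p xs = (if \<not> W (Orig p) xs \<and> \<not> W (Hat p) xs then \<not> P (Orig p) xs else P (Orig p) xs)"

lemma ccD: "ccP ar ps P \<Longrightarrow> p \<in> set ps \<Longrightarrow> length ts = ar p \<Longrightarrow>
   P (Hat p) (map (evalt I e) ts) = (\<not> P (Orig p) (map (evalt I e) ts))"
  by (simp add: ccP_def)

lemma leO: "le_on (har ar) (hQ ps) W P \<Longrightarrow> p \<in> set ps \<Longrightarrow> length xs = ar p \<Longrightarrow> W (Orig p) xs \<Longrightarrow> P (Orig p) xs"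
  unfolding le_on_def by (metis har.simps(1) hQ_simps(1))
lemma leH: "le_on (har ar) (hQ ps) W P \<Longrightarrow> p \<in> set ps \<Longrightarrow> length xs = ar p \<Longrightarrow> W (Hat p) xs \<Longrightarrow> P (Hat p) xs"
  unfolding le_on_def by (metis har.simps(2) hQ_simps(2))

lemma sat_C: "sat I P' V (C_rule G) = (\<forall>e. \<not> eval I P' e G)"
  by (simp add: sat_def C_rule_def)
lemma sat_L: "sat I P' V (L_rule ((b,p,ts),G)) =
  (\<forall>e. eval I P' e G \<longrightarrow> (if b then V p (map (evalt I e) ts) else \<not> V p (map (evalt I e) ts)))"
  by (simp add: sat_def L_rule_def)
lemma sat_S: "sat I P' V (S_rule ((b1,p1,t1),(b2,p2,t2),G)) =
  (\<forall>e. eval I P' e G \<longrightarrow> ((if b1 then V p1 (map (evalt I e) t1) else \<not> V p1 (map (evalt I e) t1))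
      \<longleftrightarrow> (if b2 then V p2 (map (evalt I e) t2) else \<not> V p2 (map (evalt I e) t2))))"
  by (auto simp: sat_def S_rule_def FIff_def)
lemma sat_D: "sat I P' V (D_rule (Pos,Ng,G)) =
  (\<forall>e. eval I P' e G \<longrightarrow> ((\<exists>p ts. (p,ts)\<in>set Pos \<and> V p (map (evalt I e) ts)) \<or> (\<exists>p ts. (p,ts)\<in>set Ng \<and> \<not> V p (map (evalt I e) ts))))"
  by (simp add: sat_def D_rule_def Bex_pair bex_Un)

lemma dia_C: "(\<forall>F\<in>tr_c G. \<forall>e. evald I P W Q e F) = (\<forall>e. \<not> eval I (P \<circ> Orig) e G)"
  by (simp add: tr_c_def)
lemma dia_L: "p \<in> set ps \<Longrightarrow> (\<forall>F\<in>tr_l ((b,p,ts),G). \<forall>e. evald I P W (hQ ps) e F) =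
   (\<forall>e. eval I (P \<circ> Orig) e G \<longrightarrow> (if b then W (Orig p) (map (evalt I e) ts) else W (Hat p) (map (evalt I e) ts)))"
  by (simp add: tr_l_def)
lemma D_dia: assumes "\<forall>p ts. (p,ts)\<in>set Pos \<longrightarrow> p \<in> set ps" "\<forall>p ts. (p,ts)\<in>set Ng \<longrightarrow> p \<in> set ps"
  shows "(\<forall>F\<in>tr_d (Pos,Ng,G). evald I P W (hQ ps) e F) =
   (eval I (P \<circ> Orig) e G \<and> (\<forall>p ts. (p,ts)\<in>set Pos \<longrightarrow> W (Hat p) (map (evalt I e) ts) \<or> \<not> P (Hat p) (map (evalt I e) ts))
     \<and> (\<forall>p ts. (p,ts)\<in>set Ng \<longrightarrow> W (Orig p) (map (evalt I e) ts) \<or> \<not> P (Orig p) (map (evalt I e) ts))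
    \<longrightarrow> (\<exists>p ts. (p,ts)\<in>set Pos \<and> W (Orig p) (map (evalt I e) ts)) \<or> (\<exists>p ts. (p,ts)\<in>set Ng \<and> W (Hat p) (map (evalt I e) ts)))"
  using assms by (simp add: tr_d_def Ball_pair Bex_pair ball_Un bex_Un) blast

lemma C_hold: "(\<forall>F\<in>tr_c G. holds I P F) = sat I (P \<circ> Orig) (P \<circ> Orig) (C_rule G)"
  by (simp add: holds_def tr_c_def sat_C)
lemma C_W: "sat I (P \<circ> Orig) (P \<circ> Orig) (C_rule G) \<Longrightarrow> \<forall>F\<in>tr_c G. \<forall>e. evald I P W Q e F"
  by (simp add: dia_C sat_C)
lemma C_U: "sat I (P \<circ> Orig) (P \<circ> Orig) (C_rule G) \<Longrightarrow> sat I (P \<circ> Orig) V (C_rule G)"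
  by (simp add: sat_C)

lemma L_hold: assumes cc: "ccP ar ps P" and ok: "p \<in> set ps" "length ts = ar p"
  shows "(\<forall>F\<in>tr_l ((b,p,ts),G). holds I P F) = sat I (P \<circ> Orig) (P \<circ> Orig) (L_rule ((b,p,ts),G))"
  using ok by (auto simp: hl_dia[where Q="hQ ps"] dia_L sat_L ccD[OF cc ok])

lemma L_W: assumes cc: "ccP ar ps P" and ok: "p \<in> set ps" "length ts = ar p"
  and s1: "sat I (P \<circ> Orig) (P \<circ> Orig) (L_rule ((b,p,ts),G))"
  and s2: "sat I (P \<circ> Orig) U (L_rule ((b,p,ts),G))"
  shows "\<forall>F\<in>tr_l ((b,p,ts),G). \<forall>e. evald I P (Wd P U) (hQ ps) e F"
  using s1 s2 ok by (auto simp: dia_L sat_L ccD[OF cc ok])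

lemma L_U: assumes cc: "ccP ar ps P" and ok: "p \<in> set ps" "length ts = ar p"
  and le: "le_on (har ar) (hQ ps) W P"
  and d: "\<forall>F\<in>tr_l ((b,p,ts),G). \<forall>e. evald I P W (hQ ps) e F"
  shows "sat I (P \<circ> Orig) (Ud P W) (L_rule ((b,p,ts),G))"
  unfolding sat_L
proof (intro allI impI)
  fix e assume g: "eval I (P \<circ> Orig) e G"
  let ?x = "map (evalt I e) ts"
  have w: "if b then W (Orig p) ?x else W (Hat p) ?x" using d g ok by (simp add: dia_L)
  have l1: "W (Orig p) ?x \<Longrightarrow> P (Orig p) ?x" using leO[OF le ok(1)] ok by simp
  have l2: "W (Hat p) ?x \<Longrightarrow> P (Hat p) ?x" using leH[OF le ok(1)] ok by simp
  have c: "P (Hat p) ?x = (\<not> P (Orig p) ?x)" using ccD[OF cc ok] .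
  show "if b then Ud P W p ?x else \<not> Ud P W p ?x"
    using w l1 l2 c by (auto simp: Ud_def split: if_splits)
qed

lemma S_prop:
  fixes b1 b2 o1 h1 o2 h2 q1 q2 :: bool
  assumes A: "(if b1 then q1 else \<not>q1) \<longleftrightarrow> (if b2 then q2 else \<not>q2)"
  and l: "o1 \<longrightarrow> q1" "h1 \<longrightarrow> \<not>q1" "o2 \<longrightarrow> q2" "h2 \<longrightarrow> \<not>q2"
  and D: "if b1 = b2 then (o1 \<longrightarrow> o2) \<and> (o2 \<longrightarrow> o1) \<and> (h1 \<longrightarrow> h2) \<and> (h2 \<longrightarrow> h1)
          else (h1 \<longrightarrow> o2) \<and> (o2 \<longrightarrow> h1) \<and> (o1 \<longrightarrow> h2) \<and> (h2 \<longrightarrow> o1)"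
  shows "(if b1 then (if \<not>o1 \<and> \<not>h1 then \<not>q1 else q1) else \<not>(if \<not>o1 \<and> \<not>h1 then \<not>q1 else q1))
     \<longleftrightarrow> (if b2 then (if \<not>o2 \<and> \<not>h2 then \<not>q2 else q2) else \<not>(if \<not>o2 \<and> \<not>h2 then \<not>q2 else q2))"
  using assms by argo

lemma S_Wprop:
  fixes b1 b2 q1 q2 u1 u2 :: bool
  assumes A: "(if b1 then q1 else \<not>q1) \<longleftrightarrow> (if b2 then q2 else \<not>q2)"
  and B: "(if b1 then u1 else \<not>u1) \<longleftrightarrow> (if b2 then u2 else \<not>u2)"
  shows "if b1 = b2 then ((q1\<and>u1) \<longrightarrow> (q2\<and>u2)) \<and> ((q2\<and>u2)\<longrightarrow>(q1\<and>u1)) \<and> ((\<not>q1 \<and> \<not>u1) \<longrightarrow> (\<not>q2\<and>\<not>u2)) \<and> ((\<not>q2 \<and> \<not>u2) \<longrightarrow> (\<not>q1\<and>\<not>u1))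
     else ((\<not>q1\<and>\<not>u1) \<longrightarrow> (q2\<and>u2)) \<and> ((q2\<and>u2) \<longrightarrow> (\<not>q1\<and>\<not>u1)) \<and> ((q1\<and>u1) \<longrightarrow> (\<not>q2\<and>\<not>u2)) \<and> ((\<not>q2 \<and> \<not>u2) \<longrightarrow> (q1 \<and> u1))"
  using assms by argo

lemma S_hold: assumes cc: "ccP ar ps P" and ok: "p1 \<in> set ps" "length t1 = ar p1" "p2 \<in> set ps" "length t2 = ar p2"
  shows "(\<forall>F\<in>tr_s ((b1,p1,t1),(b2,p2,t2),G). holds I P F) = sat I (P \<circ> Orig) (P \<circ> Orig) (S_rule ((b1,p1,t1),(b2,p2,t2),G))"
proof -
  have pe: "(\<forall>F\<in>tr_s ((b1,p1,t1),(b2,p2,t2),G). eval I P e F) = (eval I (P \<circ> Orig) e G \<longrightarrow>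
     ((if b1 then P (Orig p1) (map (evalt I e) t1) else \<not> P (Orig p1) (map (evalt I e) t1))
      \<longleftrightarrow> (if b2 then P (Orig p2) (map (evalt I e) t2) else \<not> P (Orig p2) (map (evalt I e) t2))))" for e
    using ccD[OF cc ok(1,2), of I e] ccD[OF cc ok(3,4), of I e]
    by (cases b1; cases b2; simp add: tr_s_def Let_def; argo)
  have "(\<forall>F\<in>tr_s ((b1,p1,t1),(b2,p2,t2),G). holds I P F) = (\<forall>e. \<forall>F\<in>tr_s ((b1,p1,t1),(b2,p2,t2),G). eval I P e F)"
    unfolding holds_def by blast
  then show ?thesis unfolding sat_S by (simp only: pe o_apply)
qed

lemma S_W: assumes cc: "ccP ar ps P" and ok: "p1 \<in> set ps" "length t1 = ar p1" "p2 \<in> set ps" "length t2 = ar p2"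
  and s1: "sat I (P \<circ> Orig) (P \<circ> Orig) (S_rule ((b1,p1,t1),(b2,p2,t2),G))"
  and s2: "sat I (P \<circ> Orig) U (S_rule ((b1,p1,t1),(b2,p2,t2),G))"
  shows "\<forall>F\<in>tr_s ((b1,p1,t1),(b2,p2,t2),G). \<forall>e. evald I P (Wd P U) (hQ ps) e F"
proof -
  have "\<forall>F\<in>tr_s ((b1,p1,t1),(b2,p2,t2),G). evald I P (Wd P U) (hQ ps) e F" for e
  proof (cases "eval I (P \<circ> Orig) e G")
    case True
    let ?x1 = "map (evalt I e) t1" and ?x2 = "map (evalt I e) t2"
    have A: "(if b1 then P (Orig p1) ?x1 else \<not> P (Orig p1) ?x1) \<longleftrightarrow> (if b2 then P (Orig p2) ?x2 else \<not> P (Orig p2) ?x2)"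
      using s1 True unfolding sat_S by auto
    have B: "(if b1 then U p1 ?x1 else \<not> U p1 ?x1) \<longleftrightarrow> (if b2 then U p2 ?x2 else \<not> U p2 ?x2)"
      using s2 True unfolding sat_S by auto
    have c1: "P (Hat p1) ?x1 = (\<not> P (Orig p1) ?x1)" using ccD[OF cc ok(1,2)] .
    have c2: "P (Hat p2) ?x2 = (\<not> P (Orig p2) ?x2)" using ccD[OF cc ok(3,4)] .
    have D: "if b1 = b2 then ((P (Orig p1) ?x1 \<and> U p1 ?x1) \<longrightarrow> (P (Orig p2) ?x2 \<and> U p2 ?x2)) \<and> ((P (Orig p2) ?x2 \<and> U p2 ?x2)\<longrightarrow>(P (Orig p1) ?x1 \<and> U p1 ?x1))
        \<and> ((\<not>P (Orig p1) ?x1 \<and> \<not>U p1 ?x1) \<longrightarrow> (\<not>P (Orig p2) ?x2 \<and> \<not>U p2 ?x2)) \<and> ((\<not>P (Orig p2) ?x2 \<and> \<not>U p2 ?x2) \<longrightarrow> (\<not>P (Orig p1) ?x1 \<and> \<not>U p1 ?x1))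
      else ((\<not>P (Orig p1) ?x1 \<and> \<not>U p1 ?x1) \<longrightarrow> (P (Orig p2) ?x2 \<and> U p2 ?x2)) \<and> ((P (Orig p2) ?x2 \<and> U p2 ?x2) \<longrightarrow> (\<not>P (Orig p1) ?x1 \<and> \<not>U p1 ?x1))
        \<and> ((P (Orig p1) ?x1 \<and> U p1 ?x1) \<longrightarrow> (\<not>P (Orig p2) ?x2 \<and> \<not>U p2 ?x2)) \<and> ((\<not>P (Orig p2) ?x2 \<and> \<not>U p2 ?x2) \<longrightarrow> (P (Orig p1) ?x1 \<and> U p1 ?x1))"
      by (rule S_Wprop[OF A B])
    show ?thesis
      apply (cases "b1 = b2")
       apply (simp_all add: tr_s_def Let_def ok c1 c2 True)
      using D by argo+
  next
    case False then show ?thesis by (auto simp: tr_s_def Let_def)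
  qed
  then show ?thesis by blast
qed

lemma S_U: assumes cc: "ccP ar ps P" and ok: "p1 \<in> set ps" "length t1 = ar p1" "p2 \<in> set ps" "length t2 = ar p2"
  and s1: "sat I (P \<circ> Orig) (P \<circ> Orig) (S_rule ((b1,p1,t1),(b2,p2,t2),G))"
  and le: "le_on (har ar) (hQ ps) W P"
  and d: "\<forall>F\<in>tr_s ((b1,p1,t1),(b2,p2,t2),G). \<forall>e. evald I P W (hQ ps) e F"
  shows "sat I (P \<circ> Orig) (Ud P W) (S_rule ((b1,p1,t1),(b2,p2,t2),G))"
  unfolding sat_S
proof (intro allI impI)
  fix e assume g: "eval I (P \<circ> Orig) e G"
  let ?x1 = "map (evalt I e) t1" and ?x2 = "map (evalt I e) t2"
  have A: "(if b1 then P (Orig p1) ?x1 else \<not> P (Orig p1) ?x1) \<longleftrightarrow> (if b2 then P (Orig p2) ?x2 else \<not> P (Orig p2) ?x2)"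
    using s1 g unfolding sat_S by auto
  have c1: "P (Hat p1) ?x1 = (\<not> P (Orig p1) ?x1)" using ccD[OF cc ok(1,2)] .
  have c2: "P (Hat p2) ?x2 = (\<not> P (Orig p2) ?x2)" using ccD[OF cc ok(3,4)] .
  have l1: "W (Orig p1) ?x1 \<Longrightarrow> P (Orig p1) ?x1" using leO[OF le ok(1)] ok by simp
  have l2: "W (Hat p1) ?x1 \<Longrightarrow> P (Hat p1) ?x1" using leH[OF le ok(1)] ok by simp
  have l3: "W (Orig p2) ?x2 \<Longrightarrow> P (Orig p2) ?x2" using leO[OF le ok(3)] ok by simp
  have l4: "W (Hat p2) ?x2 \<Longrightarrow> P (Hat p2) ?x2" using leH[OF le ok(3)] ok by simp
  have de: "\<forall>F\<in>tr_s ((b1,p1,t1),(b2,p2,t2),G). evald I P W (hQ ps) e F" using d by blast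
  have D: "if b1 = b2 then (W (Orig p1) ?x1 \<longrightarrow> W (Orig p2) ?x2) \<and> (W (Orig p2) ?x2 \<longrightarrow> W (Orig p1) ?x1)
       \<and> (W (Hat p1) ?x1 \<longrightarrow> W (Hat p2) ?x2) \<and> (W (Hat p2) ?x2 \<longrightarrow> W (Hat p1) ?x1)
     else (W (Hat p1) ?x1 \<longrightarrow> W (Orig p2) ?x2) \<and> (W (Orig p2) ?x2 \<longrightarrow> W (Hat p1) ?x1)
       \<and> (W (Orig p1) ?x1 \<longrightarrow> W (Hat p2) ?x2) \<and> (W (Hat p2) ?x2 \<longrightarrow> W (Orig p1) ?x1)"
    using de g ok by (cases "b1 = b2") (simp_all add: tr_s_def Let_def)
  have m1: "W (Orig p1) ?x1 \<longrightarrow> P (Orig p1) ?x1" using l1 by blast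
  have m2: "W (Hat p1) ?x1 \<longrightarrow> \<not> P (Orig p1) ?x1" using l2 c1 by blast
  have m3: "W (Orig p2) ?x2 \<longrightarrow> P (Orig p2) ?x2" using l3 by blast
  have m4: "W (Hat p2) ?x2 \<longrightarrow> \<not> P (Orig p2) ?x2" using l4 c2 by blast
  show "(if b1 then Ud P W p1 ?x1 else \<not> Ud P W p1 ?x1) \<longleftrightarrow> (if b2 then Ud P W p2 ?x2 else \<not> Ud P W p2 ?x2)"
    using S_prop[OF A m1 m2 m3 m4 D] by (simp only: Ud_def)
qed

lemma D_hold: assumes cc: "ccP ar ps P"
  and okP: "\<forall>p ts. (p,ts)\<in>set Pos \<longrightarrow> p \<in> set ps \<and> length ts = ar p"
  and okN: "\<forall>p ts. (p,ts)\<in>set Ng \<longrightarrow> p \<in> set ps \<and> length ts = ar p"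
  shows "(\<forall>F\<in>tr_d (Pos,Ng,G). holds I P F) = sat I (P \<circ> Orig) (P \<circ> Orig) (D_rule (Pos,Ng,G))"
proof -
  have "(\<forall>F\<in>tr_d (Pos,Ng,G). holds I P F) = (\<forall>e. \<forall>F\<in>tr_d (Pos,Ng,G). evald I P P (hQ ps) e F)"
    by (auto simp: hl_dia[where Q="hQ ps"])
  also have "\<dots> = (\<forall>e. eval I (P \<circ> Orig) e G \<longrightarrow>
      (\<exists>p ts. (p,ts)\<in>set Pos \<and> P (Orig p) (map (evalt I e) ts)) \<or> (\<exists>p ts. (p,ts)\<in>set Ng \<and> P (Hat p) (map (evalt I e) ts)))"
    using okP okN by (simp add: D_dia)
  also have "\<dots> = sat I (P \<circ> Orig) (P \<circ> Orig) (D_rule (Pos,Ng,G))"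
  proof -
    have "\<And>e. (\<exists>p ts. (p,ts)\<in>set Ng \<and> P (Hat p) (map (evalt I e) ts)) = (\<exists>p ts. (p,ts)\<in>set Ng \<and> \<not> P (Orig p) (map (evalt I e) ts))"
      using okN ccD[OF cc] by blast
    then show ?thesis by (simp add: sat_D)
  qed
  finally show ?thesis .
qed

lemma D_W: assumes cc: "ccP ar ps P"
  and okP: "\<forall>p ts. (p,ts)\<in>set Pos \<longrightarrow> p \<in> set ps \<and> length ts = ar p"
  and okN: "\<forall>p ts. (p,ts)\<in>set Ng \<longrightarrow> p \<in> set ps \<and> length ts = ar p"
  and s2: "sat I (P \<circ> Orig) U (D_rule (Pos,Ng,G))"
  shows "\<forall>F\<in>tr_d (Pos,Ng,G). \<forall>e. evald I P (Wd P U) (hQ ps) e F"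
proof -
  have "\<forall>F\<in>tr_d (Pos,Ng,G). evald I P (Wd P U) (hQ ps) e F" for e
  proof -
    let ?x = "\<lambda>ts. map (evalt I e) ts"
    have cP: "\<forall>p ts. (p,ts)\<in>set Pos \<longrightarrow> P (Hat p) (?x ts) = (\<not> P (Orig p) (?x ts))"
      using okP ccD[OF cc] by blast
    have cN: "\<forall>p ts. (p,ts)\<in>set Ng \<longrightarrow> P (Hat p) (?x ts) = (\<not> P (Orig p) (?x ts))"
      using okN ccD[OF cc] by blast
    have "(\<exists>p ts. (p,ts)\<in>set Pos \<and> Wd P U (Orig p) (?x ts)) \<or> (\<exists>p ts. (p,ts)\<in>set Ng \<and> Wd P U (Hat p) (?x ts))"
      if g: "eval I (P \<circ> Orig) e G"
      and hP: "\<forall>p ts. (p,ts)\<in>set Pos \<longrightarrow> Wd P U (Hat p) (?x ts) \<or> \<not> P (Hat p) (?x ts)"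
      and hN: "\<forall>p ts. (p,ts)\<in>set Ng \<longrightarrow> Wd P U (Orig p) (?x ts) \<or> \<not> P (Orig p) (?x ts)"
    proof -
      have "(\<exists>p ts. (p,ts)\<in>set Pos \<and> U p (?x ts)) \<or> (\<exists>p ts. (p,ts)\<in>set Ng \<and> \<not> U p (?x ts))"
        using s2 g by (simp add: sat_D)
      then show ?thesis
      proof
        assume "\<exists>p ts. (p,ts)\<in>set Pos \<and> U p (?x ts)"
        then obtain p ts where m: "(p,ts)\<in>set Pos" and u: "U p (?x ts)" by blast
        show ?thesis using hP m u cP by force
      next
        assume "\<exists>p ts. (p,ts)\<in>set Ng \<and> \<not> U p (?x ts)"
        then obtain p ts where m: "(p,ts)\<in>set Ng" and u: "\<not> U p (?x ts)" by blast
        show ?thesis using hN m u cN by force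
      qed
    qed
    then show ?thesis
      using okP okN by (subst D_dia) blast+
  qed
  then show ?thesis by blast
qed

lemma D_U: assumes cc: "ccP ar ps P"
  and okP: "\<forall>p ts. (p,ts)\<in>set Pos \<longrightarrow> p \<in> set ps \<and> length ts = ar p"
  and okN: "\<forall>p ts. (p,ts)\<in>set Ng \<longrightarrow> p \<in> set ps \<and> length ts = ar p"
  and le: "le_on (har ar) (hQ ps) W P"
  and d: "\<forall>F\<in>tr_d (Pos,Ng,G). \<forall>e. evald I P W (hQ ps) e F"
  shows "sat I (P \<circ> Orig) (Ud P W) (D_rule (Pos,Ng,G))"
  unfolding sat_D
proof (intro allI impI)
  fix e assume g: "eval I (P \<circ> Orig) e G"
  let ?x = "\<lambda>ts. map (evalt I e) ts"
  have cP: "\<forall>p ts. (p,ts)\<in>set Pos \<longrightarrow> P (Hat p) (?x ts) = (\<not> P (Orig p) (?x ts))"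
    using okP ccD[OF cc] by blast
  have cN: "\<forall>p ts. (p,ts)\<in>set Ng \<longrightarrow> P (Hat p) (?x ts) = (\<not> P (Orig p) (?x ts))"
    using okN ccD[OF cc] by blast
  have lP: "\<forall>p ts. (p,ts)\<in>set Pos \<longrightarrow> (W (Orig p) (?x ts) \<longrightarrow> P (Orig p) (?x ts)) \<and> (W (Hat p) (?x ts) \<longrightarrow> P (Hat p) (?x ts))"
    using okP leO[OF le] leH[OF le] by simp
  have lN: "\<forall>p ts. (p,ts)\<in>set Ng \<longrightarrow> (W (Orig p) (?x ts) \<longrightarrow> P (Orig p) (?x ts)) \<and> (W (Hat p) (?x ts) \<longrightarrow> P (Hat p) (?x ts))"
    using okN leO[OF le] leH[OF le] by simp
  have de: "eval I (P \<circ> Orig) e G \<and> (\<forall>p ts. (p,ts)\<in>set Pos \<longrightarrow> W (Hat p) (?x ts) \<or> \<not> P (Hat p) (?x ts))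
     \<and> (\<forall>p ts. (p,ts)\<in>set Ng \<longrightarrow> W (Orig p) (?x ts) \<or> \<not> P (Orig p) (?x ts))
    \<longrightarrow> (\<exists>p ts. (p,ts)\<in>set Pos \<and> W (Orig p) (?x ts)) \<or> (\<exists>p ts. (p,ts)\<in>set Ng \<and> W (Hat p) (?x ts))"
    using d okP okN by (subst D_dia[symmetric]) blast+
  show "(\<exists>p ts. (p,ts)\<in>set Pos \<and> Ud P W p (?x ts)) \<or> (\<exists>p ts. (p,ts)\<in>set Ng \<and> \<not> Ud P W p (?x ts))"
  proof (rule ccontr)
    assume n: "\<not> ?thesis"
    have hP: "\<forall>p ts. (p,ts)\<in>set Pos \<longrightarrow> W (Hat p) (?x ts) \<or> \<not> P (Hat p) (?x ts)"
    proof (intro allI impI)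
      fix p ts assume m: "(p,ts)\<in>set Pos"
      then have "\<not> Ud P W p (?x ts)" using n by blast
      then show "W (Hat p) (?x ts) \<or> \<not> P (Hat p) (?x ts)" using m cP lP by (auto simp: Ud_def split: if_splits)
    qed
    have hN: "\<forall>p ts. (p,ts)\<in>set Ng \<longrightarrow> W (Orig p) (?x ts) \<or> \<not> P (Orig p) (?x ts)"
    proof (intro allI impI)
      fix p ts assume m: "(p,ts)\<in>set Ng"
      then have "Ud P W p (?x ts)" using n by blast
      then show "W (Orig p) (?x ts) \<or> \<not> P (Orig p) (?x ts)" using m cN lN by (auto simp: Ud_def split: if_splits)
    qed
    have "(\<exists>p ts. (p,ts)\<in>set Pos \<and> W (Orig p) (?x ts)) \<or> (\<exists>p ts. (p,ts)\<in>set Ng \<and> W (Hat p) (?x ts))"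
      using de g hP hN by blast
    then show False
    proof
      assume "\<exists>p ts. (p,ts)\<in>set Pos \<and> W (Orig p) (?x ts)"
      then obtain p ts where m: "(p,ts)\<in>set Pos" and w: "W (Orig p) (?x ts)" by blast
      have "\<not> Ud P W p (?x ts)" using n m by blast
      then show False using w m lP by (auto simp: Ud_def)
    next
      assume "\<exists>p ts. (p,ts)\<in>set Ng \<and> W (Hat p) (?x ts)"
      then obtain p ts where m: "(p,ts)\<in>set Ng" and w: "W (Hat p) (?x ts)" by blast
      have "Ud P W p (?x ts)" using n m by blast
      then show False using w m lN cN by (auto simp: Ud_def)
    qed
  qed
qed


fun hok :: "('p \<Rightarrow> nat) \<Rightarrow> 'p list \<Rightarrow> ('f, 'p) form \<Rightarrow> bool" where
  "hok ar ps (FAtom p ts) = (p \<in> set ps \<and> length ts = ar p)"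
| "hok ar ps (FNeg F) = hok ar ps F"
| "hok ar ps (FAnd F G) = (hok ar ps F \<and> hok ar ps G)"
| "hok ar ps (FOr F G) = (hok ar ps F \<and> hok ar ps G)"
| "hok ar ps (FImp F G) = (hok ar ps F \<and> hok ar ps G)"
| "hok ar ps FBot = True"
| "hok ar ps FTop = True"
| "hok ar ps _ = False"

lemma hok_eval: "hok ar ps F \<Longrightarrow> \<forall>p\<in>set ps. \<forall>xs. length xs = ar p \<longrightarrow> (V1 p xs = V2 p xs)
   \<Longrightarrow> eval I V1 e F = eval I V2 e F"
  by (induction F arbitrary: e) auto

lemma hok_disj: "\<forall>F\<in>set Fs. hok ar ps F \<Longrightarrow> hok ar ps (disj Fs)"
  by (induction Fs rule: disj.induct) auto

lemma hok_lit: "ok_lit ar ps l \<Longrightarrow> hok ar ps (lit_form l)"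
  by (cases l) (auto simp: ok_lit_def)

lemma hok_rules:
  assumes okL: "\<forall>(l, G)\<in>L. ok_lit ar ps l \<and> ok_body ar G"
    and okS: "\<forall>(l1, l2, G)\<in>S. ok_lit ar ps l1 \<and> ok_lit ar ps l2 \<and> ok_body ar G"
    and okD: "\<forall>(Pos, Ng, G)\<in>D. (\<forall>a\<in>set Pos. ok_atm ar ps a) \<and> (\<forall>a\<in>set Ng. ok_atm ar ps a) \<and> ok_body ar G"
  shows "\<forall>r\<in>rules_of C L S D. hok ar ps (fst r)"
proof -
  have "hok ar ps (fst (C_rule G))" for G by (simp add: C_rule_def)
  moreover have "hok ar ps (fst (L_rule r))" if "r \<in> L" for r
    using okL that by (cases r) (auto simp: L_rule_def intro: hok_lit)
  moreover have "hok ar ps (fst (S_rule r))" if "r \<in> S" for r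
    using okS that by (cases r) (auto simp: S_rule_def FIff_def intro: hok_lit)
  moreover have "hok ar ps (fst (D_rule r))" if "r \<in> D" for r
  proof -
    obtain Pos Ng G where r: "r = (Pos, Ng, G)" by (metis prod_cases3)
    then have a: "\<forall>a\<in>set Pos. ok_atm ar ps a" "\<forall>a\<in>set Ng. ok_atm ar ps a" using okD that by auto
    show ?thesis unfolding r D_rule_def
      using a by (auto intro!: hok_disj simp: ok_atm_def split: prod.splits)
  qed
  ultimately show ?thesis by (auto simp: rules_of_def)
qed

lemma Tdag_eq: assumes hk: "\<forall>r\<in>R. hok ar ps (fst r)"
  shows "(\<forall>(F, G)\<in>R. \<forall>e. eval I P' e G \<longrightarrow> eval I (\<lambda>q. if q \<in> set ps then U q else P' q) e F)
     = (\<forall>r\<in>R. sat I P' U r)"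
proof -
  have "eval I (\<lambda>q. if q \<in> set ps then U q else P' q) e F = eval I U e F" if "(F,G) \<in> R" for F G e
    using hok_eval[of ar ps F "\<lambda>q. if q \<in> set ps then U q else P' q" U] hk that by fastforce
  then show ?thesis unfolding sat_def by fastforce
qed

lemma agree_sat: assumes hk: "\<forall>r\<in>R. hok ar ps (fst r)"
  and ag: "\<forall>p\<in>set ps. \<forall>xs. length xs = ar p \<longrightarrow> (U p xs \<longleftrightarrow> P' p xs)"
  shows "(\<forall>r\<in>R. sat I P' U r) = (\<forall>r\<in>R. sat I P' P' r)"
proof -
  have "eval I U e (fst r) = eval I P' e (fst r)" if "r \<in> R" for r e
    using hok_eval[of ar ps "fst r" U P'] hk that ag by blast
  then show ?thesis unfolding sat_def by auto
qed

lemma ccE: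
  fixes I :: "'f \<Rightarrow> 'a list \<Rightarrow> 'a" and P :: "'p hsym \<Rightarrow> 'a list \<Rightarrow> bool"
  shows "(\<forall>F\<in>CC ar ps. holds I P F) = ccP ar ps P"
proof
  assume h: "\<forall>F\<in>CC ar ps. holds I P F"
  show "ccP ar ps P" unfolding ccP_def
  proof (intro ballI allI impI)
    fix p and xs :: "'a list" assume p: "p \<in> set ps" and l: "length xs = ar p"
    let ?e = "\<lambda>i. xs ! i"
    have m: "map (evalt I ?e) (map Var [0..<ar p]) = xs"
      using l map_nth[of xs] by (simp add: comp_def)
    have "holds I P (FNeg (FAnd (FAtom (Orig p) (map Var [0..<ar p])) (FAtom (Hat p) (map Var [0..<ar p]))))"
         "holds I P (FNeg (FAnd (FNeg (FAtom (Orig p) (map Var [0..<ar p]))) (FNeg (FAtom (Hat p) (map Var [0..<ar p])))))"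
      using h p by (auto simp: CC_def Let_def)
    then have "eval I P ?e (FNeg (FAnd (FAtom (Orig p) (map Var [0..<ar p])) (FAtom (Hat p) (map Var [0..<ar p]))))"
         "eval I P ?e (FNeg (FAnd (FNeg (FAtom (Orig p) (map Var [0..<ar p]))) (FNeg (FAtom (Hat p) (map Var [0..<ar p])))))"
      unfolding holds_def by blast+
    then show "P (Hat p) xs = (\<not> P (Orig p) xs)" by (simp only: eval.simps m) blast
  qed
next
  assume "ccP ar ps P" then show "\<forall>F\<in>CC ar ps. holds I P F"
    by (auto simp: CC_def Let_def holds_def ccP_def)
qed

lemma CC_evald: "F \<in> CC ar ps \<Longrightarrow> evald I P W Q e F = eval I P e F"
  by (auto simp: CC_def Let_def)


lemma L_ex: obtains b p ts G where "r = ((b,p,ts),G)"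
  by (metis prod_cases3 surj_pair)

lemma okL_D: "\<forall>(l, G)\<in>L. ok_lit ar ps l \<and> ok_body ar G \<Longrightarrow> ((b,p,ts),G) \<in> L \<Longrightarrow> p \<in> set ps \<and> length ts = ar p"
  by (auto simp: ok_lit_def)

lemma okS_D: "\<forall>(l1, l2, G)\<in>S. ok_lit ar ps l1 \<and> ok_lit ar ps l2 \<and> ok_body ar G \<Longrightarrow> ((b1,p1,t1),(b2,p2,t2),G) \<in> S
   \<Longrightarrow> p1 \<in> set ps \<and> length t1 = ar p1 \<and> p2 \<in> set ps \<and> length t2 = ar p2"
  by (auto simp: ok_lit_def)

lemma S_ex: obtains b1 p1 t1 b2 p2 t2 G where "r = ((b1,p1,t1),(b2,p2,t2),G)"
  by (metis prod_cases3)

lemma okD_D: "\<forall>(Pos, Ng, G)\<in>D. (\<forall>a\<in>set Pos. ok_atm ar ps a) \<and> (\<forall>a\<in>set Ng. ok_atm ar ps a) \<and> ok_body ar G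
   \<Longrightarrow> (Pos,Ng,G) \<in> D \<Longrightarrow> (\<forall>p ts. (p,ts)\<in>set Pos \<longrightarrow> p \<in> set ps \<and> length ts = ar p)
     \<and> (\<forall>p ts. (p,ts)\<in>set Ng \<longrightarrow> p \<in> set ps \<and> length ts = ar p)"
  by (fastforce simp: ok_atm_def)

lemma hold_all:
  assumes cc: "ccP ar ps P"
    and okL: "\<forall>(l, G)\<in>L. ok_lit ar ps l \<and> ok_body ar G"
    and okS: "\<forall>(l1, l2, G)\<in>S. ok_lit ar ps l1 \<and> ok_lit ar ps l2 \<and> ok_body ar G"
    and okD: "\<forall>(Pos, Ng, G)\<in>D. (\<forall>a\<in>set Pos. ok_atm ar ps a) \<and> (\<forall>a\<in>set Ng. ok_atm ar ps a) \<and> ok_body ar G"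
  shows "(\<forall>F\<in>tr ar ps C L S D. holds I P F) = (\<forall>r\<in>rules_of C L S D. sat I (P \<circ> Orig) (P \<circ> Orig) r)"
proof -
  have hC: "(\<forall>G\<in>C. \<forall>F\<in>tr_c G. holds I P F) = (\<forall>G\<in>C. sat I (P \<circ> Orig) (P \<circ> Orig) (C_rule G))"
    using C_hold by blast
  have hL: "(\<forall>r\<in>L. \<forall>F\<in>tr_l r. holds I P F) = (\<forall>r\<in>L. sat I (P \<circ> Orig) (P \<circ> Orig) (L_rule r))"
  proof (rule ball_cong[OF refl])
    fix r assume r: "r \<in> L"
    obtain b p ts G where e: "r = ((b,p,ts),G)" by (rule L_ex)
    show "(\<forall>F\<in>tr_l r. holds I P F) = sat I (P \<circ> Orig) (P \<circ> Orig) (L_rule r)"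
      using okL_D[OF okL r[unfolded e]] L_hold[OF cc] unfolding e by blast
  qed
  have hS: "(\<forall>r\<in>S. \<forall>F\<in>tr_s r. holds I P F) = (\<forall>r\<in>S. sat I (P \<circ> Orig) (P \<circ> Orig) (S_rule r))"
  proof (rule ball_cong[OF refl])
    fix r assume r: "r \<in> S"
    obtain b1 p1 t1 b2 p2 t2 G where e: "r = ((b1,p1,t1),(b2,p2,t2),G)" by (rule S_ex)
    show "(\<forall>F\<in>tr_s r. holds I P F) = sat I (P \<circ> Orig) (P \<circ> Orig) (S_rule r)"
      using okS_D[OF okS r[unfolded e]] S_hold[OF cc] unfolding e by blast
  qed
  have hD: "(\<forall>r\<in>D. \<forall>F\<in>tr_d r. holds I P F) = (\<forall>r\<in>D. sat I (P \<circ> Orig) (P \<circ> Orig) (D_rule r))"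
  proof (rule ball_cong[OF refl])
    fix r assume r: "r \<in> D"
    obtain Pos Ng G where e: "r = (Pos,Ng,G)" by (metis prod_cases3)
    show "(\<forall>F\<in>tr_d r. holds I P F) = sat I (P \<circ> Orig) (P \<circ> Orig) (D_rule r)"
      using okD_D[OF okD r[unfolded e]] D_hold[OF cc] unfolding e by blast
  qed
  have hCC: "\<forall>F\<in>CC ar ps. holds I P F" using cc ccE by blast
  show ?thesis
    unfolding tr_def rules_of_def ball_Un ball_UN ball_img
    using hC hL hS hD hCC by blast
qed

lemma W_all:
  fixes I :: "'f \<Rightarrow> 'a list \<Rightarrow> 'a" and P :: "'p hsym \<Rightarrow> 'a list \<Rightarrow> bool"
  assumes cc: "ccP ar ps P"
    and okL: "\<forall>(l, G)\<in>L. ok_lit ar ps l \<and> ok_body ar G"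
    and okS: "\<forall>(l1, l2, G)\<in>S. ok_lit ar ps l1 \<and> ok_lit ar ps l2 \<and> ok_body ar G"
    and okD: "\<forall>(Pos, Ng, G)\<in>D. (\<forall>a\<in>set Pos. ok_atm ar ps a) \<and> (\<forall>a\<in>set Ng. ok_atm ar ps a) \<and> ok_body ar G"
    and s0: "\<forall>r\<in>rules_of C L S D. sat I (P \<circ> Orig) (P \<circ> Orig) r"
    and sU: "\<forall>r\<in>rules_of C L S D. sat I (P \<circ> Orig) U r"
  shows "\<forall>F\<in>tr ar ps C L S D. \<forall>e. evald I P (Wd P U) (hQ ps) e F"
proof -
  have hC: "\<forall>G\<in>C. \<forall>F\<in>tr_c G. \<forall>e. evald I P (Wd P U) (hQ ps) e F"
  proof
    fix G assume "G \<in> C"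
    then have "sat I (P \<circ> Orig) (P \<circ> Orig) (C_rule G)" using s0 by (auto simp: rules_of_def)
    then show "\<forall>F\<in>tr_c G. \<forall>e. evald I P (Wd P U) (hQ ps) e F" by (rule C_W)
  qed
  have hL: "\<forall>r\<in>L. \<forall>F\<in>tr_l r. \<forall>e. evald I P (Wd P U) (hQ ps) e F"
  proof
    fix r assume r: "r \<in> L"
    obtain b p ts G where e: "r = ((b,p,ts),G)" by (rule L_ex)
    have "sat I (P \<circ> Orig) (P \<circ> Orig) (L_rule r)" "sat I (P \<circ> Orig) U (L_rule r)"
      using s0 sU r by (auto simp: rules_of_def)
    then show "\<forall>F\<in>tr_l r. \<forall>e. evald I P (Wd P U) (hQ ps) e F"
      using okL_D[OF okL r[unfolded e]] L_W[OF cc] unfolding e by blast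
  qed
  have hS: "\<forall>r\<in>S. \<forall>F\<in>tr_s r. \<forall>e. evald I P (Wd P U) (hQ ps) e F"
  proof
    fix r assume r: "r \<in> S"
    obtain b1 p1 t1 b2 p2 t2 G where e: "r = ((b1,p1,t1),(b2,p2,t2),G)" by (rule S_ex)
    have "sat I (P \<circ> Orig) (P \<circ> Orig) (S_rule r)" "sat I (P \<circ> Orig) U (S_rule r)"
      using s0 sU r by (auto simp: rules_of_def)
    then show "\<forall>F\<in>tr_s r. \<forall>e. evald I P (Wd P U) (hQ ps) e F"
      using okS_D[OF okS r[unfolded e]] S_W[OF cc] unfolding e by blast
  qed
  have hD: "\<forall>r\<in>D. \<forall>F\<in>tr_d r. \<forall>e. evald I P (Wd P U) (hQ ps) e F"
  proof
    fix r assume r: "r \<in> D"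
    obtain Pos Ng G where e: "r = (Pos,Ng,G)" by (metis prod_cases3)
    have "sat I (P \<circ> Orig) U (D_rule r)"
      using sU r by (auto simp: rules_of_def)
    then show "\<forall>F\<in>tr_d r. \<forall>e. evald I P (Wd P U) (hQ ps) e F"
      using okD_D[OF okD r[unfolded e]] D_W[OF cc] unfolding e by blast
  qed
  have hCC: "\<forall>F\<in>CC ar ps. \<forall>e. evald I P (Wd P U) (hQ ps) e F"
  proof (intro ballI allI)
    fix F :: "('f, 'p hsym) form" and e assume F: "F \<in> CC ar ps"
    then have "holds I P F" using cc ccE[of ar ps I P] by blast
    then show "evald I P (Wd P U) (hQ ps) e F" by (simp add: holds_def CC_evald[OF F])
  qed
  show ?thesis
    unfolding tr_def ball_Un ball_UN
    using hC hL hS hD hCC by blast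
qed

lemma U_all:
  assumes cc: "ccP ar ps P"
    and okL: "\<forall>(l, G)\<in>L. ok_lit ar ps l \<and> ok_body ar G"
    and okS: "\<forall>(l1, l2, G)\<in>S. ok_lit ar ps l1 \<and> ok_lit ar ps l2 \<and> ok_body ar G"
    and okD: "\<forall>(Pos, Ng, G)\<in>D. (\<forall>a\<in>set Pos. ok_atm ar ps a) \<and> (\<forall>a\<in>set Ng. ok_atm ar ps a) \<and> ok_body ar G"
    and s0: "\<forall>r\<in>rules_of C L S D. sat I (P \<circ> Orig) (P \<circ> Orig) r"
    and le: "le_on (har ar) (hQ ps) W P"
    and d: "\<forall>F\<in>tr ar ps C L S D. \<forall>e. evald I P W (hQ ps) e F"
  shows "\<forall>r\<in>rules_of C L S D. sat I (P \<circ> Orig) (Ud P W) r"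
proof -
  have hC: "\<forall>G\<in>C. sat I (P \<circ> Orig) (Ud P W) (C_rule G)"
  proof
    fix G assume "G \<in> C"
    then have "sat I (P \<circ> Orig) (P \<circ> Orig) (C_rule G)" using s0 by (auto simp: rules_of_def)
    then show "sat I (P \<circ> Orig) (Ud P W) (C_rule G)" by (rule C_U)
  qed
  have hL: "\<forall>r\<in>L. sat I (P \<circ> Orig) (Ud P W) (L_rule r)"
  proof
    fix r assume r: "r \<in> L"
    obtain b p ts G where e: "r = ((b,p,ts),G)" by (rule L_ex)
    have "\<forall>F\<in>tr_l r. \<forall>e. evald I P W (hQ ps) e F" using d r by (auto simp: tr_def)
    then show "sat I (P \<circ> Orig) (Ud P W) (L_rule r)"
      using okL_D[OF okL r[unfolded e]] L_U[OF cc _ _ le] unfolding e by blast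
  qed
  have hS: "\<forall>r\<in>S. sat I (P \<circ> Orig) (Ud P W) (S_rule r)"
  proof
    fix r assume r: "r \<in> S"
    obtain b1 p1 t1 b2 p2 t2 G where e: "r = ((b1,p1,t1),(b2,p2,t2),G)" by (rule S_ex)
    have "\<forall>F\<in>tr_s r. \<forall>e. evald I P W (hQ ps) e F" using d r by (auto simp: tr_def)
    moreover have "sat I (P \<circ> Orig) (P \<circ> Orig) (S_rule r)" using s0 r by (auto simp: rules_of_def)
    ultimately show "sat I (P \<circ> Orig) (Ud P W) (S_rule r)"
      using okS_D[OF okS r[unfolded e]] S_U[OF cc _ _ _ _ _ le] unfolding e by blast
  qed
  have hD: "\<forall>r\<in>D. sat I (P \<circ> Orig) (Ud P W) (D_rule r)"
  proof
    fix r assume r: "r \<in> D"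
    obtain Pos Ng G where e: "r = (Pos,Ng,G)" by (metis prod_cases3)
    have "\<forall>F\<in>tr_d r. \<forall>e. evald I P W (hQ ps) e F" using d r by (auto simp: tr_def)
    then show "sat I (P \<circ> Orig) (Ud P W) (D_rule r)"
      using okD_D[OF okD r[unfolded e]] D_U[OF cc _ _ le] unfolding e by blast
  qed
  show ?thesis unfolding rules_of_def using hC hL hS hD by blast
qed


theorem mainTheorem1:
  fixes ps :: "'p list" and ar :: "'p \<Rightarrow> nat"
    and C :: "('f, 'p) form set"
    and L :: "(('f, 'p) lit \<times> ('f, 'p) form) set"
    and S :: "(('f, 'p) lit \<times> ('f, 'p) lit \<times> ('f, 'p) form) set"
    and D :: "(('f, 'p) atm list \<times> ('f, 'p) atm list \<times> ('f, 'p) form) set"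
    and I :: "'f \<Rightarrow> 'a list \<Rightarrow> 'a" and P :: "'p hsym \<Rightarrow> 'a list \<Rightarrow> bool"
  assumes "distinct ps"
    and "finite C" and "finite L" and "finite S" and "finite D"
    and "\<forall>G\<in>C. ok_body ar G"
    and "\<forall>(l, G)\<in>L. ok_lit ar ps l \<and> ok_body ar G"
    and "\<forall>(l1, l2, G)\<in>S. ok_lit ar ps l1 \<and> ok_lit ar ps l2 \<and> ok_body ar G"
    and "\<forall>(Pos, Ng, G)\<in>D. (\<forall>a\<in>set Pos. ok_atm ar ps a) \<and> (\<forall>a\<in>set Ng. ok_atm ar ps a) \<and> ok_body ar G"
  shows "SM (har ar) (hQ ps) (tr ar ps C L S D) I P \<longleftrightarrow>
         (causal_sat ar ps (rules_of C L S D) I (P \<circ> Orig) \<and> (\<forall>F\<in>CC ar ps. holds I P F))"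
proof -
  note okL = assms(7) and okS = assms(8) and okD = assms(9)
  let ?P' = "P \<circ> Orig"
  let ?R = "rules_of C L S D"
  let ?T = "tr ar ps C L S D"
  have hk: "\<forall>r\<in>?R. hok ar ps (fst r)" using hok_rules[OF okL okS okD] .
  have cs: "causal_sat ar ps ?R I ?P' = (\<forall>U. (\<forall>r\<in>?R. sat I ?P' U r)
      \<longleftrightarrow> (\<forall>p\<in>set ps. \<forall>xs. length xs = ar p \<longrightarrow> (U p xs \<longleftrightarrow> ?P' p xs)))"
    unfolding causal_sat_def Tdag_eq[OF hk] ..
  have CCsub: "CC ar ps \<subseteq> ?T" by (auto simp: tr_def)
  show ?thesis
  proof
    assume sm: "SM (har ar) (hQ ps) ?T I P"
    have hT: "\<forall>F\<in>?T. holds I P F" using sm by (simp add: SM_def)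
    have min: "\<not> (\<exists>W. le_on (har ar) (hQ ps) W P \<and> \<not> le_on (har ar) (hQ ps) P W
                   \<and> (\<forall>F\<in>?T. \<forall>e. evald I P W (hQ ps) e F))"
      using sm by (simp add: SM_def)
    have hCC: "\<forall>F\<in>CC ar ps. holds I P F" using hT CCsub by blast
    have cc: "ccP ar ps P" using hCC ccE by blast
    have s0: "\<forall>r\<in>?R. sat I ?P' ?P' r" using hold_all[OF cc okL okS okD] hT by blast
    have "causal_sat ar ps ?R I ?P'" unfolding cs
    proof (intro allI iffI)
      fix U assume sU: "\<forall>r\<in>?R. sat I ?P' U r"
      show "\<forall>p\<in>set ps. \<forall>xs. length xs = ar p \<longrightarrow> (U p xs \<longleftrightarrow> ?P' p xs)"
      proof (rule ccontr)
        assume "\<not> ?thesis"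
        then obtain p xs where p: "p \<in> set ps" "length xs = ar p" and d: "U p xs \<noteq> P (Orig p) xs" by auto
        let ?W = "Wd P U"
        have le: "le_on (har ar) (hQ ps) ?W P" by (auto simp: le_on_def Wd_def split: hsym.splits)
        have nle: "\<not> le_on (har ar) (hQ ps) P ?W"
        proof
          assume le2: "le_on (har ar) (hQ ps) P ?W"
          show False
          proof (cases "P (Orig p) xs")
            case True
            then have "?W (Orig p) xs" using leO[OF le2 p] by blast
            then show False using d True by simp
          next
            case False
            then have "P (Hat p) xs" using cc p by (simp add: ccP_def)
            then have "?W (Hat p) xs" using leH[OF le2 p] by blast
            then show False using d False by simp
          qed
        qed
        have dia: "\<forall>F\<in>?T. \<forall>e. evald I P ?W (hQ ps) e F" using W_all[OF cc okL okS okD s0 sU] .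
        show False using min le nle dia by blast
      qed
    next
      fix U assume ag: "\<forall>p\<in>set ps. \<forall>xs. length xs = ar p \<longrightarrow> (U p xs \<longleftrightarrow> ?P' p xs)"
      show "\<forall>r\<in>?R. sat I ?P' U r" using agree_sat[OF hk ag] s0 by blast
    qed
    then show "causal_sat ar ps ?R I ?P' \<and> (\<forall>F\<in>CC ar ps. holds I P F)" using hCC by blast
  next
    assume h: "causal_sat ar ps ?R I ?P' \<and> (\<forall>F\<in>CC ar ps. holds I P F)"
    have cc: "ccP ar ps P" using h ccE by blast
    have allU: "\<forall>U. (\<forall>r\<in>?R. sat I ?P' U r) \<longleftrightarrow> (\<forall>p\<in>set ps. \<forall>xs. length xs = ar p \<longrightarrow> (U p xs \<longleftrightarrow> ?P' p xs))"
      using h cs by simp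
    have cs': "(\<forall>r\<in>?R. sat I ?P' U r) \<longleftrightarrow> (\<forall>p\<in>set ps. \<forall>xs. length xs = ar p \<longrightarrow> (U p xs \<longleftrightarrow> ?P' p xs))" for U
      using allU by (rule spec)
    have s0: "\<forall>r\<in>?R. sat I ?P' ?P' r" using cs'[of ?P'] by simp
    have hT: "\<forall>F\<in>?T. holds I P F" using hold_all[OF cc okL okS okD] s0 by blast
    have min: "\<not> (\<exists>W. le_on (har ar) (hQ ps) W P \<and> \<not> le_on (har ar) (hQ ps) P W
                   \<and> (\<forall>F\<in>?T. \<forall>e. evald I P W (hQ ps) e F))"
    proof
      assume "\<exists>W. le_on (har ar) (hQ ps) W P \<and> \<not> le_on (har ar) (hQ ps) P W
                   \<and> (\<forall>F\<in>?T. \<forall>e. evald I P W (hQ ps) e F)"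
      then obtain W where le: "le_on (har ar) (hQ ps) W P" and nle: "\<not> le_on (har ar) (hQ ps) P W"
        and dia: "\<forall>F\<in>?T. \<forall>e. evald I P W (hQ ps) e F" by blast
      have "\<forall>r\<in>?R. sat I ?P' (Ud P W) r" using U_all[OF cc okL okS okD s0 le dia] .
      then have ag: "\<forall>p\<in>set ps. \<forall>xs. length xs = ar p \<longrightarrow> (Ud P W p xs \<longleftrightarrow> P (Orig p) xs)"
        using cs' by simp
      from nle obtain q xs where q: "q \<in> hQ ps" and lq: "length xs = har ar q" and pq: "P q xs" and wq: "\<not> W q xs"
        unfolding le_on_def by blast
      show False
      proof (cases q)
        case (Orig p)
        then have p: "p \<in> set ps" "length xs = ar p" using q lq by auto
        have "\<not> W (Hat p) xs"
        proof
          assume "W (Hat p) xs"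
          then have "P (Hat p) xs" using leH[OF le p] by blast
          then show False using cc p pq Orig by (simp add: ccP_def)
        qed
        then have "Ud P W p xs = (\<not> P (Orig p) xs)" using wq Orig by (simp add: Ud_def)
        then show False using ag p by blast
      next
        case (Hat p)
        then have p: "p \<in> set ps" "length xs = ar p" using q lq by auto
        have np: "\<not> P (Orig p) xs" using cc p pq Hat by (simp add: ccP_def)
        have "\<not> W (Orig p) xs"
        proof
          assume "W (Orig p) xs"
          then have "P (Orig p) xs" using leO[OF le p] by blast
          then show False using np by blast
        qed
        then have "Ud P W p xs = (\<not> P (Orig p) xs)" using wq Hat by (simp add: Ud_def)
        then show False using ag p by blast
      qed
    qed
    show "SM (har ar) (hQ ps) ?T I P" unfolding SM_def using hT min by blast
  qed
qed

end
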